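(* Let $\Omega\subset\{1,\dots,|\mathcal{Y}|\}$ with $|\Omega|=|\mathcal{X}|$ be such that $M_\Omega$ is invertible. Then $\mathbf{1}^T\left(M_{\Omega}^{-1}MP_Y\right)=1$. Furthermore, for every $J_u\in\mathbb{R}^{|\mathcal{X}|}$ with $\sum_x J_u(x)=0$, $\mathbf{1}^T\left(M_{\Omega}^{-1}M\begin{bmatrix}P_{X|Y_1}^{-1}J_u\\0\end{bmatrix}\right)=0$.
   Context: Setting: $X,Y$ on finite alphabets with $|\mathcal{X}|<|\mathcal{Y}|$, joint pmf $P_{XY}$ with marginal vectors $P_X,P_Y$ having positive entries. $P_{X|Y}\in\mathbb{R}^{|\mathcal{X}|\times|\mathcal{Y}|}$ (columns are the conditional distributions $P_{X|Y=y}$) has full row rank, with $P_{X|Y}=[P_{X|Y_1},P_{X|Y_2}]$ where $P_{X|Y_1}$ (the first $|\mathcal{X}|$ columns) is invertible. With an SVD $P_{X|Y}=U\Sigma V^T$, $V=[v_1,\dots,v_{|\mathcal{Y}|}]$, set $M=[v_1,\dots,v_{|\mathcal{X}|}]^T$. $M_\Omega\in\mathbb{R}^{|\mathcal{X}|\times|\mathcal{X}|}$ is the submatrix of $M$ formed by the columns indexed by $\Omega$ (in increasing order). The zero block has size $|\mathcal{Y}|-|\mathcal{X}|$; $\mathbf{1}$ is the all-ones vector. *)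

theory Defs
  imports "Jordan_Normal_Form.DL_Rank_Submatrix"
begin

text \<open>The (two-sided) inverse of a square matrix, chosen by Hilbert choice;
  it is only used for matrices assumed invertible.\<close>
definition mat_inv :: "real mat \<Rightarrow> real mat" where
  "mat_inv A = (SOME B. inverts_mat A B \<and> inverts_mat B A)"

definition ones_vec :: "nat \<Rightarrow> real vec" where
  "ones_vec n = vec n (\<lambda>_. 1)"

end

theory Submission
  imports Defs
begin


lemma sum_delta_r: "k < (n::nat) \<Longrightarrow> (\<Sum>a<n. f a * (if a = k then 1 else 0)) = (f k :: real)"
  by (simp add: mult.commute[of "f _"] if_distrib[of "\<lambda>x. x * f _"] cong: if_cong)

lemma mv_index_sum:
  "A \<in> carrier_mat n m \<Longrightarrow> x \<in> carrier_vec m \<Longrightarrow> i < n \<Longrightarrow>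
   (A *\<^sub>v x) $ i = (\<Sum>j<m. A $$ (i, j) * x $ j)"
  by (simp add: scalar_prod_def lessThan_atLeast0[symmetric])

lemma mat_inv_props:
  assumes "invertible_mat A" "A \<in> carrier_mat n n"
  shows "mat_inv A \<in> carrier_mat n n" "A * mat_inv A = 1\<^sub>m n" "mat_inv A * A = 1\<^sub>m n"
proof -
  from assms(1) obtain B where "inverts_mat A B \<and> inverts_mat B A"
    unfolding invertible_mat_def by blast
  hence h: "inverts_mat A (mat_inv A) \<and> inverts_mat (mat_inv A) A"
    unfolding mat_inv_def by (rule someI)
  hence 1: "A * mat_inv A = 1\<^sub>m n" and 2: "mat_inv A * A = 1\<^sub>m (dim_row (mat_inv A))"
    using assms(2) unfolding inverts_mat_def by auto
  have "dim_col (A * mat_inv A) = n" using 1 by simp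
  hence c: "dim_col (mat_inv A) = n" by simp
  have "dim_col (mat_inv A * A) = n" using assms(2) by simp
  have "dim_row (mat_inv A * A) = dim_row (mat_inv A)" by simp
  hence "dim_col (1\<^sub>m (dim_row (mat_inv A)) :: real mat) = n" using 2 assms(2) by (metis index_mult_mat(3) carrier_matD(2))
  hence r: "dim_row (mat_inv A) = n" by simp
  show "mat_inv A \<in> carrier_mat n n" using c r by auto
  show "A * mat_inv A = 1\<^sub>m n" by (rule 1)
  show "mat_inv A * A = 1\<^sub>m n" using 2 r by simp
qed

theorem proposition4:
  fixes nx ny :: nat
    and PXY PXgY U S V M :: "real mat"
    and PX PY :: "real vec"
    and \<Omega> :: "nat set"
  assumes alph: "0 < nx" "nx < ny"
    and PXY_carrier: "PXY \<in> carrier_mat nx ny"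
    and PXY_nonneg: "\<forall>i<nx. \<forall>j<ny. 0 \<le> PXY $$ (i, j)"
    and PXY_sum: "(\<Sum>i<nx. \<Sum>j<ny. PXY $$ (i, j)) = 1"
    and PX_def: "PX = vec nx (\<lambda>i. \<Sum>j<ny. PXY $$ (i, j))"
    and PY_def: "PY = vec ny (\<lambda>j. \<Sum>i<nx. PXY $$ (i, j))"
    and PX_pos: "\<forall>i<nx. 0 < PX $ i"
    and PY_pos: "\<forall>j<ny. 0 < PY $ j"
    and PXgY_def: "PXgY = mat nx ny (\<lambda>(i, j). PXY $$ (i, j) / PY $ j)"
    and full_rank: "vec_space.rank nx PXgY = nx"
    and P1_inv: "invertible_mat (submatrix PXgY UNIV {..<nx})"
    and U_carrier: "U \<in> carrier_mat nx nx"
    and S_carrier: "S \<in> carrier_mat nx ny"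
    and V_carrier: "V \<in> carrier_mat ny ny"
    and U_orth: "transpose_mat U * U = 1\<^sub>m nx"
    and V_orth: "transpose_mat V * V = 1\<^sub>m ny"
    and S_diag: "\<forall>i<nx. \<forall>j<ny. i \<noteq> j \<longrightarrow> S $$ (i, j) = 0"
    and S_nonneg: "\<forall>i<nx. 0 \<le> S $$ (i, i)"
    and S_sorted: "\<forall>i<nx. \<forall>k<nx. i \<le> k \<longrightarrow> S $$ (k, k) \<le> S $$ (i, i)"
    and svd: "PXgY = U * S * transpose_mat V"
    and M_def: "M = mat nx ny (\<lambda>(i, j). V $$ (j, i))"
    and Omega_sub: "\<Omega> \<subseteq> {..<ny}"
    and Omega_card: "card \<Omega> = nx"
    and MOmega_inv: "invertible_mat (submatrix M UNIV \<Omega>)"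
  shows "ones_vec nx \<bullet> (mat_inv (submatrix M UNIV \<Omega>) *\<^sub>v (M *\<^sub>v PY)) = 1
    \<and> (\<forall>J \<in> carrier_vec nx. (\<Sum>i<nx. J $ i) = 0 \<longrightarrow>
         ones_vec nx \<bullet> (mat_inv (submatrix M UNIV \<Omega>) *\<^sub>v
            (M *\<^sub>v (mat_inv (submatrix PXgY UNIV {..<nx}) *\<^sub>v J @\<^sub>v 0\<^sub>v (ny - nx)))) = 0)"
proof -
  define E :: "real mat" where "E = mat ny nx (\<lambda>(a, k). if a = k then 1 else 0)"
  define Q where "Q = PXgY * transpose_mat M"
  define MO where "MO = submatrix M UNIV \<Omega>"
  define PO where "PO = submatrix PXgY UNIV \<Omega>"
  define N where "N = mat_inv MO"
  have E_c: "E \<in> carrier_mat ny nx" unfolding E_def by simp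
  have M_c: "M \<in> carrier_mat nx ny" unfolding M_def by simp
  have P_c: "PXgY \<in> carrier_mat nx ny" unfolding PXgY_def by simp
  have MT: "transpose_mat M = V * E"
  proof (rule eq_matI)
    fix i j assume ij: "i < dim_row (V * E)" "j < dim_col (V * E)"
    hence "i < ny" "j < nx" using V_carrier E_c by auto
    thus "transpose_mat M $$ (i, j) = (V * E) $$ (i, j)"
      using V_carrier unfolding M_def E_def
      apply (simp add: scalar_prod_def lessThan_atLeast0[symmetric])
      apply (rule sum_delta_r[symmetric])
      using alph by simp
  qed (use V_carrier E_c M_c in auto)
  have SE: "S * E * transpose_mat E = S"
  proof (rule eq_matI)
    fix i j assume ij: "i < dim_row S" "j < dim_col S"
    hence i: "i < nx" and j: "j < ny" using S_carrier by auto
    have "(S * E * transpose_mat E) $$ (i, j) = (\<Sum>k<nx. (S * E) $$ (i, k) * (if j = k then 1 else 0))"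
      using i j S_carrier E_c unfolding E_def
      by (simp add: scalar_prod_def lessThan_atLeast0[symmetric])
    also have "\<dots> = (\<Sum>k<nx. S $$ (i, k) * (if j = k then 1 else 0))"
    proof (rule sum.cong[OF refl])
      fix k assume "k \<in> {..<nx}"
      hence "(S * E) $$ (i, k) = S $$ (i, k)"
        using i S_carrier unfolding E_def
        apply (simp add: scalar_prod_def lessThan_atLeast0[symmetric])
        apply (rule sum_delta_r)
        using alph by simp
      thus "(S * E) $$ (i, k) * (if j = k then 1 else 0) = S $$ (i, k) * (if j = k then 1 else 0)" by simp
    qed
    also have "\<dots> = S $$ (i, j)"
    proof (cases "j < nx")
      case True thus ?thesis by (simp add: if_distrib sum.delta cong: if_cong)
    next
      case False
      hence "S $$ (i, j) = 0" using S_diag i j by auto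
      thus ?thesis using False by (simp add: if_distrib cong: if_cong)
    qed
    finally show "(S * E * transpose_mat E) $$ (i, j) = S $$ (i, j)" .
  qed (use S_carrier E_c in auto)
  have QM: "Q * M = PXgY"
  proof -
    have Mt: "M = transpose_mat E * transpose_mat V"
      by (metis MT transpose_mult transpose_transpose V_carrier E_c)
    have US: "U * S \<in> carrier_mat nx ny" using U_carrier S_carrier by simp
    have VT: "transpose_mat V \<in> carrier_mat ny ny" using V_carrier by simp
    have VE: "V * E \<in> carrier_mat ny nx" using V_carrier E_c by simp
    have ET: "transpose_mat E \<in> carrier_mat nx ny" using E_c by simp
    have EE: "E * transpose_mat E \<in> carrier_mat ny ny" using E_c by simp
    have "Q = U * S * transpose_mat V * (V * E)" unfolding Q_def svd MT ..
    also have "\<dots> = U * S * (transpose_mat V * (V * E))"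
      by (rule assoc_mult_mat[OF US VT VE])
    also have "transpose_mat V * (V * E) = transpose_mat V * V * E"
      by (rule assoc_mult_mat[OF VT V_carrier E_c, symmetric])
    also have "\<dots> = E" using V_orth E_c by simp
    finally have Q1: "Q = U * S * E" .
    have USE: "U * S * E \<in> carrier_mat nx nx" using US E_c by simp
    have SEE: "S * (E * transpose_mat E) = S"
      using SE assoc_mult_mat[OF S_carrier E_c ET] by simp
    have "Q * M = U * S * E * (transpose_mat E * transpose_mat V)" unfolding Q1 Mt ..
    also have "\<dots> = U * S * E * transpose_mat E * transpose_mat V"
      by (rule assoc_mult_mat[OF USE ET VT, symmetric])
    also have "U * S * E * transpose_mat E = U * S * (E * transpose_mat E)"
      by (rule assoc_mult_mat[OF US E_c ET])
    also have "\<dots> = U * (S * (E * transpose_mat E))"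
      by (rule assoc_mult_mat[OF U_carrier S_carrier EE])
    also have "\<dots> = U * S" using SEE by simp
    finally show ?thesis using svd by simp
  qed
  have Q_c: "Q \<in> carrier_mat nx nx" unfolding Q_def using P_c M_c by simp
  have cardO: "card {j. j < ny \<and> j \<in> \<Omega>} = nx"
  proof -
    have "{j. j < ny \<and> j \<in> \<Omega>} = \<Omega>" using Omega_sub by auto
    thus ?thesis using Omega_card by simp
  qed
  have cardU: "card {i. i < nx \<and> i \<in> (UNIV::nat set)} = nx" by simp
  have MO_c: "MO \<in> carrier_mat nx nx"
  proof (rule carrier_matI)
    have d: "dim_row M = nx" "dim_col M = ny" using M_c by auto
    show "dim_row MO = nx" unfolding MO_def dim_submatrix d by simp
    show "dim_col MO = nx" unfolding MO_def dim_submatrix d by (rule cardO)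
  qed
  have PO_c: "PO \<in> carrier_mat nx nx"
  proof (rule carrier_matI)
    have d: "dim_row PXgY = nx" "dim_col PXgY = ny" using P_c by auto
    show "dim_row PO = nx" unfolding PO_def dim_submatrix d by simp
    show "dim_col PO = nx" unfolding PO_def dim_submatrix d by (rule cardO)
  qed
  have pickO: "\<And>j. j < nx \<Longrightarrow> pick \<Omega> j < ny"
    using pick_le cardO by (metis (no_types, lifting) Collect_cong)
  have QMO: "Q * MO = PO"
  proof (rule eq_matI)
    fix i j assume "i < dim_row PO" "j < dim_col PO"
    hence i: "i < nx" and j: "j < nx" using PO_c by auto
    have "(Q * MO) $$ (i, j) = row Q i \<bullet> col MO j" using i j Q_c MO_c by simp
    also have "col MO j = col M (pick \<Omega> j)"
      using j M_c cardO pickO[OF j] unfolding MO_def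
      by (intro eq_vecI) (auto simp: submatrix_index pick_UNIV dim_submatrix)
    also have "row Q i \<bullet> col M (pick \<Omega> j) = (Q * M) $$ (i, pick \<Omega> j)"
      using i pickO[OF j] Q_c M_c by simp
    also have "\<dots> = PO $$ (i, j)"
      unfolding QM PO_def using i j P_c cardO by (simp add: submatrix_index pick_UNIV)
    finally show "(Q * MO) $$ (i, j) = PO $$ (i, j)" .
  qed (use Q_c MO_c PO_c in auto)
  have N_c: "N \<in> carrier_mat nx nx" and MN: "MO * N = 1\<^sub>m nx"
    using mat_inv_props[OF _ MO_c] MOmega_inv unfolding N_def MO_def[symmetric] by auto
  have QPN: "Q = PO * N"
  proof -
    have "Q = Q * (MO * N)" using MN Q_c by simp
    also have "\<dots> = (Q * MO) * N" using Q_c MO_c N_c by (simp add: assoc_mult_mat)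
    finally show ?thesis using QMO by simp
  qed
  have colsum: "\<And>j. j < ny \<Longrightarrow> (\<Sum>i<nx. PXgY $$ (i, j)) = 1"
  proof -
    fix j assume j: "j < ny"
    have "(\<Sum>i<nx. PXgY $$ (i, j)) = (\<Sum>i<nx. PXY $$ (i, j)) / PY $ j"
      unfolding PXgY_def using j by (simp add: sum_divide_distrib)
    also have "\<dots> = 1"
    proof -
      have "(\<Sum>i<nx. PXY $$ (i, j)) > 0" using PY_pos j unfolding PY_def by simp
      thus ?thesis unfolding PY_def using j by simp
    qed
    finally show "(\<Sum>i<nx. PXgY $$ (i, j)) = 1" .
  qed
  have onesPO: "transpose_mat PO *\<^sub>v ones_vec nx = ones_vec nx"
  proof (rule eq_vecI)
    fix j assume "j < dim_vec (ones_vec nx)"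
    hence j: "j < nx" unfolding ones_vec_def by simp
    have "(transpose_mat PO *\<^sub>v ones_vec nx) $ j = (\<Sum>i<nx. PO $$ (i, j))"
      using j PO_c unfolding ones_vec_def
      by (simp add: scalar_prod_def lessThan_atLeast0[symmetric])
    also have "\<dots> = (\<Sum>i<nx. PXgY $$ (i, pick \<Omega> j))"
      unfolding PO_def using j P_c cardO by (simp add: submatrix_index pick_UNIV)
    also have "\<dots> = 1" using colsum pickO[OF j] by simp
    finally show "(transpose_mat PO *\<^sub>v ones_vec nx) $ j = ones_vec nx $ j"
      using j unfolding ones_vec_def by simp
  qed (use PO_c in \<open>simp add: ones_vec_def\<close>)
  have key: "\<And>x. x \<in> carrier_vec ny \<Longrightarrow>
     ones_vec nx \<bullet> (N *\<^sub>v (M *\<^sub>v x)) = ones_vec nx \<bullet> (PXgY *\<^sub>v x)"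
  proof -
    fix x :: "real vec" assume x: "x \<in> carrier_vec ny"
    have o: "ones_vec nx \<in> carrier_vec nx" unfolding ones_vec_def by simp
    have Mx: "M *\<^sub>v x \<in> carrier_vec nx" using M_c x by simp
    have "ones_vec nx \<bullet> (N *\<^sub>v (M *\<^sub>v x)) = (transpose_mat N *\<^sub>v ones_vec nx) \<bullet> (M *\<^sub>v x)"
      using transpose_vec_mult_scalar[OF N_c Mx o] by simp
    also have "transpose_mat N *\<^sub>v ones_vec nx = transpose_mat N *\<^sub>v (transpose_mat PO *\<^sub>v ones_vec nx)"
      using onesPO by simp
    also have "\<dots> = transpose_mat Q *\<^sub>v ones_vec nx"
      unfolding QPN using N_c PO_c o
      by (simp add: transpose_mult assoc_mult_mat_vec[of _ nx nx _ nx])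
    also have "(transpose_mat Q *\<^sub>v ones_vec nx) \<bullet> (M *\<^sub>v x) = ones_vec nx \<bullet> (Q *\<^sub>v (M *\<^sub>v x))"
      using transpose_vec_mult_scalar[OF Q_c Mx o] by simp
    also have "Q *\<^sub>v (M *\<^sub>v x) = PXgY *\<^sub>v x"
      using QM Q_c M_c x by (metis assoc_mult_mat_vec)
    finally show "ones_vec nx \<bullet> (N *\<^sub>v (M *\<^sub>v x)) = ones_vec nx \<bullet> (PXgY *\<^sub>v x)" .
  qed
  have part1: "ones_vec nx \<bullet> (N *\<^sub>v (M *\<^sub>v PY)) = 1"
  proof -
    have PY_c: "PY \<in> carrier_vec ny" unfolding PY_def by simp
    have "ones_vec nx \<bullet> (PXgY *\<^sub>v PY) = (\<Sum>i<nx. \<Sum>j<ny. PXgY $$ (i, j) * PY $ j)"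
      using P_c PY_c unfolding ones_vec_def
      by (simp add: scalar_prod_def lessThan_atLeast0[symmetric])
    also have "\<dots> = (\<Sum>i<nx. \<Sum>j<ny. PXY $$ (i, j))"
      using PY_pos unfolding PXgY_def by (intro sum.cong refl) auto
    finally show ?thesis using key[OF PY_c] PXY_sum by simp
  qed
  have part2: "\<forall>J \<in> carrier_vec nx. (\<Sum>i<nx. J $ i) = 0 \<longrightarrow>
         ones_vec nx \<bullet> (N *\<^sub>v (M *\<^sub>v (mat_inv (submatrix PXgY UNIV {..<nx}) *\<^sub>v J @\<^sub>v 0\<^sub>v (ny - nx)))) = 0"
  proof (intro ballI impI)
    fix J :: "real vec" assume J: "J \<in> carrier_vec nx" and s: "(\<Sum>i<nx. J $ i) = 0"
    define P1 where "P1 = submatrix PXgY UNIV {..<nx}"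
    have c1: "card {j. j < ny \<and> j \<in> {..<nx}} = nx"
    proof -
      have "{j. j < ny \<and> j \<in> {..<nx}} = {..<nx}" using alph by auto
      thus ?thesis by simp
    qed
    have P1_c: "P1 \<in> carrier_mat nx nx"
    proof (rule carrier_matI)
      have d: "dim_row PXgY = nx" "dim_col PXgY = ny" using P_c by auto
      show "dim_row P1 = nx" unfolding P1_def dim_submatrix d by simp
      show "dim_col P1 = nx" unfolding P1_def dim_submatrix d by (rule c1)
    qed
    have pk: "\<And>j. j < nx \<Longrightarrow> pick {..<nx} j = j"
    proof -
      fix j assume j: "j < nx"
      have "{a\<in>{..<nx}. a < j} = {..<j}" using j by auto
      hence "card {a\<in>{..<nx}. a < j} = j" by simp
      thus "pick {..<nx} j = j" using pick_card_in_set[of j "{..<nx}"] j by simp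
    qed
    define w where "w = mat_inv P1 *\<^sub>v J"
    have I_c: "mat_inv P1 \<in> carrier_mat nx nx" and PI: "P1 * mat_inv P1 = 1\<^sub>m nx"
      using mat_inv_props[OF _ P1_c] P1_inv unfolding P1_def by auto
    have w_c: "w \<in> carrier_vec nx" unfolding w_def using I_c J by simp
    have x_c: "w @\<^sub>v 0\<^sub>v (ny - nx) \<in> carrier_vec ny"
    proof -
      have "w @\<^sub>v 0\<^sub>v (ny - nx) \<in> carrier_vec (nx + (ny - nx))"
        by (rule append_carrier_vec[OF w_c zero_carrier_vec])
      thus ?thesis using alph by simp
    qed
    have P1w: "P1 *\<^sub>v w = J"
      unfolding w_def using I_c P1_c J PI by (simp add: assoc_mult_mat_vec[symmetric])
    have "PXgY *\<^sub>v (w @\<^sub>v 0\<^sub>v (ny - nx)) = J"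
    proof (rule eq_vecI)
      fix i assume "i < dim_vec J"
      hence i: "i < nx" using J by simp
      have "(PXgY *\<^sub>v (w @\<^sub>v 0\<^sub>v (ny - nx))) $ i =
            (\<Sum>j<ny. PXgY $$ (i, j) * (w @\<^sub>v 0\<^sub>v (ny - nx)) $ j)"
        by (rule mv_index_sum[OF P_c x_c i])
      also have "\<dots> = (\<Sum>j<nx. PXgY $$ (i, j) * w $ j)"
      proof -
        have "{..<ny} = {..<nx} \<union> {nx..<ny}" using alph by auto
        have "(\<Sum>j<ny. PXgY $$ (i, j) * (w @\<^sub>v 0\<^sub>v (ny - nx)) $ j) =
           (\<Sum>j<nx. PXgY $$ (i, j) * (w @\<^sub>v 0\<^sub>v (ny - nx)) $ j) +
           (\<Sum>j\<in>{nx..<ny}. PXgY $$ (i, j) * (w @\<^sub>v 0\<^sub>v (ny - nx)) $ j)"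
          unfolding \<open>{..<ny} = {..<nx} \<union> {nx..<ny}\<close> by (rule sum.union_disjoint) auto
        also have "(\<Sum>j\<in>{nx..<ny}. PXgY $$ (i, j) * (w @\<^sub>v 0\<^sub>v (ny - nx)) $ j) = 0"
          using w_c by (intro sum.neutral) (auto simp: index_append_vec)
        also have "(\<Sum>j<nx. PXgY $$ (i, j) * (w @\<^sub>v 0\<^sub>v (ny - nx)) $ j) = (\<Sum>j<nx. PXgY $$ (i, j) * w $ j)"
          using w_c by (intro sum.cong refl) (auto simp: index_append_vec)
        finally show ?thesis by simp
      qed
      also have "\<dots> = (\<Sum>j<nx. P1 $$ (i, j) * w $ j)"
      proof (rule sum.cong[OF refl])
        fix j assume "j \<in> {..<nx}"
        hence j: "j < nx" by simp
        have d: "dim_row PXgY = nx" "dim_col PXgY = ny" using P_c by auto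
        have "P1 $$ (i, j) = PXgY $$ (pick UNIV i, pick {..<nx} j)"
          unfolding P1_def by (rule submatrix_index) (use i j c1 d in auto)
        thus "PXgY $$ (i, j) * w $ j = P1 $$ (i, j) * w $ j" using pk[OF j] by (simp add: pick_UNIV)
      qed
      also have "\<dots> = (P1 *\<^sub>v w) $ i"
        by (rule mv_index_sum[OF P1_c w_c i, symmetric])
      finally show "(PXgY *\<^sub>v (w @\<^sub>v 0\<^sub>v (ny - nx))) $ i = J $ i" using P1w by simp
    qed (use P_c J in auto)
    hence "ones_vec nx \<bullet> (N *\<^sub>v (M *\<^sub>v (w @\<^sub>v 0\<^sub>v (ny - nx)))) = ones_vec nx \<bullet> J"
      using key[OF x_c] by simp
    also have "\<dots> = 0" using J s unfolding ones_vec_def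
      by (simp add: scalar_prod_def lessThan_atLeast0[symmetric])
    finally show "ones_vec nx \<bullet> (N *\<^sub>v (M *\<^sub>v (mat_inv (submatrix PXgY UNIV {..<nx}) *\<^sub>v J @\<^sub>v 0\<^sub>v (ny - nx)))) = 0"
      unfolding w_def P1_def .
  qed
  show ?thesis using part1 part2 unfolding N_def MO_def by simp
qed

end
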